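(* (Local triangle inequality.) Fix an integer $N\ge1$. Let $\Gamma=(V,E)$ be a finite graph and $\phi:V\to\mathbb{C}$ a solution of equation (1) with $\gamma:V\to\mathbb{R}$. Let $x,y,z\in V$ be pairwise adjacent with $\gamma(x),\gamma(y),\gamma(z)<1$. Then $\ell(\overline{xy})+\ell(\overline{xz})\ge\ell(\overline{yz})$, and the inequality is strict if $\phi$ is not constant on $\{x\}\cup\{w:w\sim x\}$.
   Context: Equation (1) at $x$ of degree $n(x)$: $\frac{\gamma(x)}{n(x)}\big(\sum_{w\sim x}(\phi(w)-\phi(x))\big)^2=\sum_{w\sim x}(\phi(x)-\phi(w))^2$. For $x\in V$ put $\rho(x)=\frac12\Big\{\sum_{w\sim x}|\phi(w)-\phi(x)|^2-\frac{\gamma(x)}{n(x)}\Big|\sum_{w\sim x}(\phi(w)-\phi(x))\Big|^2\Big\}$. If $\gamma(x)<1$, the median edge length at $x$ (relative to $\phi$, in dimension $N$) is $r(x)\ge0$ with $r(x)^2=\frac{N+(1-N)\gamma(x)}{n(x)(1-\gamma(x))}\rho(x)$. For an edge $\overline{xy}$ with $\gamma(x),\gamma(y)<1$, its length is $\ell(\overline{xy})=\frac{r(x)+r(y)}{2}$. *)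

theory Defs
  imports Complex_Main
begin

definition simple_graph :: "'a set \<Rightarrow> ('a \<Rightarrow> 'a \<Rightarrow> bool) \<Rightarrow> bool" where
  "simple_graph V E \<longleftrightarrow> finite V \<and> (\<forall>x y. E x y \<longrightarrow> E y x) \<and> (\<forall>x. \<not> E x x)
     \<and> (\<forall>x y. E x y \<longrightarrow> x \<in> V \<and> y \<in> V)"

definition nbrs :: "'a set \<Rightarrow> ('a \<Rightarrow> 'a \<Rightarrow> bool) \<Rightarrow> 'a \<Rightarrow> 'a set" where
  "nbrs V E x = {w \<in> V. E x w}"

definition deg :: "'a set \<Rightarrow> ('a \<Rightarrow> 'a \<Rightarrow> bool) \<Rightarrow> 'a \<Rightarrow> nat" where
  "deg V E x = card (nbrs V E x)"

definition eq1_at :: "'a set \<Rightarrow> ('a \<Rightarrow> 'a \<Rightarrow> bool) \<Rightarrow> ('a \<Rightarrow> real) \<Rightarrow> ('a \<Rightarrow> complex) \<Rightarrow> 'a \<Rightarrow> bool" where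
  "eq1_at V E \<gamma> \<phi> x \<longleftrightarrow>
     complex_of_real (\<gamma> x / real (deg V E x)) * (\<Sum>w\<in>nbrs V E x. \<phi> w - \<phi> x)^2
       = (\<Sum>w\<in>nbrs V E x. (\<phi> x - \<phi> w)^2)"

definition rho :: "'a set \<Rightarrow> ('a \<Rightarrow> 'a \<Rightarrow> bool) \<Rightarrow> ('a \<Rightarrow> real) \<Rightarrow> ('a \<Rightarrow> complex) \<Rightarrow> 'a \<Rightarrow> real" where
  "rho V E \<gamma> \<phi> x = (1/2) * ((\<Sum>w\<in>nbrs V E x. (cmod (\<phi> w - \<phi> x))^2)
      - \<gamma> x / real (deg V E x) * (cmod (\<Sum>w\<in>nbrs V E x. \<phi> w - \<phi> x))^2)"

definition med_len :: "nat \<Rightarrow> 'a set \<Rightarrow> ('a \<Rightarrow> 'a \<Rightarrow> bool) \<Rightarrow> ('a \<Rightarrow> real) \<Rightarrow> ('a \<Rightarrow> complex) \<Rightarrow> 'a \<Rightarrow> real" where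
  "med_len N V E \<gamma> \<phi> x = sqrt ((real N + (1 - real N) * \<gamma> x)
      / (real (deg V E x) * (1 - \<gamma> x)) * rho V E \<gamma> \<phi> x)"

definition edge_len :: "nat \<Rightarrow> 'a set \<Rightarrow> ('a \<Rightarrow> 'a \<Rightarrow> bool) \<Rightarrow> ('a \<Rightarrow> real) \<Rightarrow> ('a \<Rightarrow> complex) \<Rightarrow> 'a \<Rightarrow> 'a \<Rightarrow> real" where
  "edge_len N V E \<gamma> \<phi> x y = (med_len N V E \<gamma> \<phi> x + med_len N V E \<gamma> \<phi> y) / 2"

end

theory Submission
  imports Defs "HOL-Analysis.Convex"
begin

theorem proposition6p4:
  fixes N :: nat and V :: "'a set" and E :: "'a \<Rightarrow> 'a \<Rightarrow> bool"
    and \<phi> :: "'a \<Rightarrow> complex" and \<gamma> :: "'a \<Rightarrow> real" and x y z :: 'a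
  assumes "N \<ge> 1"
    and "simple_graph V E"
    and "\<forall>v\<in>V. eq1_at V E \<gamma> \<phi> v"
    and "x \<in> V" "y \<in> V" "z \<in> V"
    and "E x y" "E x z" "E y z"
    and "\<gamma> x < 1" "\<gamma> y < 1" "\<gamma> z < 1"
  shows "edge_len N V E \<gamma> \<phi> x y + edge_len N V E \<gamma> \<phi> x z \<ge> edge_len N V E \<gamma> \<phi> y z
       \<and> ((\<not> (\<forall>w \<in> insert x (nbrs V E x). \<phi> w = \<phi> x)) \<longrightarrow>
         edge_len N V E \<gamma> \<phi> x y + edge_len N V E \<gamma> \<phi> x z > edge_len N V E \<gamma> \<phi> y z)"
proof -
  have key: "edge_len N V E \<gamma> \<phi> x y + edge_len N V E \<gamma> \<phi> x z
     = med_len N V E \<gamma> \<phi> x + edge_len N V E \<gamma> \<phi> y z"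
    unfolding edge_len_def by (simp add: field_simps)
  define A where "A = nbrs V E x"
  define n where "n = card A"
  have finA: "finite A" using assms(2) unfolding A_def nbrs_def simple_graph_def by auto
  have yA: "y \<in> A" using assms(5,7) unfolding A_def nbrs_def by auto
  have n1: "real n \<ge> 1" using finA yA unfolding n_def
    by (metis One_nat_def card_gt_0_iff empty_iff of_nat_1 of_nat_mono Suc_leI)
  define S where "S = (\<Sum>w\<in>A. (cmod (\<phi> w - \<phi> x))^2)"
  define T where "T = (cmod (\<Sum>w\<in>A. \<phi> w - \<phi> x))^2"
  have S00: "S \<ge> 0" unfolding S_def by (simp add: sum_nonneg)
  have "cmod (\<Sum>w\<in>A. \<phi> w - \<phi> x) \<le> (\<Sum>w\<in>A. cmod (\<phi> w - \<phi> x))"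
    by (rule norm_sum)
  hence "T \<le> (\<Sum>w\<in>A. cmod (\<phi> w - \<phi> x))^2" unfolding T_def
    by (simp add: power_mono)
  also have "\<dots> \<le> S * n" unfolding S_def n_def by (rule sum_squared_le_sum_of_squares)
  finally have TS: "T \<le> S * n" .
  have T0: "T \<ge> 0" unfolding T_def by simp
  have gen: "\<gamma> x / n * T \<le> S \<and> (S > 0 \<longrightarrow> \<gamma> x / n * T < S)"
  proof (cases "\<gamma> x \<le> 0")
    case True
    hence "\<gamma> x / n * T \<le> 0" using n1 T0
      by (simp add: divide_nonpos_pos mult_nonpos_nonneg)
    then show ?thesis using S00 by linarith
  next
    case False
    have "\<gamma> x / n * T \<le> \<gamma> x / n * (S * n)"
      using False n1 TS by (intro mult_left_mono) auto
    also have "\<dots> = \<gamma> x * S" using n1 by simp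
    finally have "\<gamma> x / n * T \<le> \<gamma> x * S" .
    moreover have "\<gamma> x * S \<le> S" using S00 assms(10) mult_right_mono[of "\<gamma> x" 1 S] by simp
    moreover have "S > 0 \<Longrightarrow> \<gamma> x * S < S" using assms(10) by simp
    ultimately show ?thesis by linarith
  qed
  have rhoeq: "rho V E \<gamma> \<phi> x = (S - \<gamma> x / n * T) / 2"
    unfolding rho_def S_def T_def n_def A_def deg_def by simp
  have c1: "real N + (1 - real N) * \<gamma> x > 0"
  proof -
    have "real N + (1 - real N) * \<gamma> x = 1 + (real N - 1) * (1 - \<gamma> x)" by algebra
    moreover have "(real N - 1) * (1 - \<gamma> x) \<ge> 0" using assms(1,10) by simp
    ultimately show ?thesis by linarith
  qed
  have c2: "real (deg V E x) * (1 - \<gamma> x) > 0"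
    using n1 assms(10) unfolding deg_def n_def A_def by simp
  have nn: "med_len N V E \<gamma> \<phi> x \<ge> 0" unfolding med_len_def
    using c1 c2 gen rhoeq by simp
  have pos: "med_len N V E \<gamma> \<phi> x > 0" if nc: "\<not> (\<forall>w \<in> insert x (nbrs V E x). \<phi> w = \<phi> x)"
  proof -
    obtain w where wA: "w \<in> A" and wne: "\<phi> w \<noteq> \<phi> x" using nc unfolding A_def by auto
    have S0: "S > 0" unfolding S_def
      using wA wne finA by (intro sum_pos2[of A w]) auto
    have rho0: "rho V E \<gamma> \<phi> x > 0" using gen S0 rhoeq by simp
    show ?thesis unfolding med_len_def using c1 c2 rho0 by simp
  qed
  show ?thesis using key nn pos by auto
qed

end
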